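(* Let $p$ be an odd prime, $m$ a positive integer, $q=p^m$. Let $l,e,r,s$ be positive integers such that $l\ge3$ is odd, $s$ is even, $\gcd(l,e)=1$, $l\mid r+es$, and $q-1=ls$. Let $\gamma$ be a primitive element of $\mathbb{F}_q$, $\xi=\gamma^s$, and $A_i=\xi^{ei}+1$ for $0\le i\le l-1$. Then $P(x)=x^r(x^{es}+1)$ is a permutation polynomial of $\mathbb{F}_q$ if and only if all of the following hold: $\gcd(r,s)=1$; $p\mid 2^s-1$; $l\nmid r$; the elements $A_1^s,A_2^s,\dots,A_{l-1}^s$ are pairwise distinct $l$-th roots of unity; and $\mathrm{Ind}_\gamma(A_k)+kr\not\equiv\mathrm{Ind}_\gamma(2)\pmod l$ for all $k=1,\dots,l-1$.
   Context: A permutation polynomial of $\mathbb{F}_q$ is one inducing a bijection of $\mathbb{F}_q$. For nonzero $a\in\mathbb{F}_q$, $\mathrm{Ind}_\gamma(a)$ is the residue class $b\bmod(q-1)$ with $a=\gamma^b$; it has a well-defined residue modulo $l$ since $l\mid q-1$. *)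

theory Defs
  imports "HOL-Computational_Algebra.Polynomial"
begin

definition perm_poly :: "'a::field poly \<Rightarrow> bool" where
  "perm_poly P \<longleftrightarrow> bij (poly P)"

definition primitive_elem :: "'a::field \<Rightarrow> bool" where
  "primitive_elem g \<longleftrightarrow> (\<forall>x. x \<noteq> 0 \<longrightarrow> (\<exists>k::nat. x = g ^ k))"

text \<open>Discrete logarithm Ind_g(a): some exponent b with a = g^b
  (determined modulo the order of g, hence modulo any l dividing q-1).\<close>
definition Ind :: "'a::field \<Rightarrow> 'a \<Rightarrow> nat" where
  "Ind g a = (SOME b. a = g ^ b)"

end

theory Submission
  imports Defs "HOL-Number_Theory.Cong"
begin

lemma field_fermat:
  fixes x :: "'a::{finite,field}"
  assumes "x \<noteq> 0"
  shows "x ^ (card (UNIV::'a set) - 1) = 1"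
proof -
  define U where "U = (UNIV::'a set) - {0}"
  have fin: "finite U" by (simp add: U_def)
  have inj: "inj_on ((*) x) U" using assms by (auto simp: inj_on_def)
  have img: "(*) x ` U = U"
    by (rule endo_inj_surj[OF fin _ inj]) (use assms in \<open>auto simp: U_def\<close>)
  have "prod id U = prod id ((*) x ` U)" by (simp add: img)
  also have "\<dots> = prod (\<lambda>y. x * y) U" using prod.reindex[OF inj, of id] by simp
  also have "\<dots> = x ^ card U * prod id U" by (simp add: prod.distrib)
  finally have "x ^ card U * prod id U = 1 * prod id U" by simp
  moreover have "prod id U \<noteq> 0" using fin by (simp add: U_def)
  ultimately have "x ^ card U = 1" by simp
  moreover have "card U = card (UNIV::'a set) - 1" by (simp add: U_def card_Diff_singleton)
  ultimately show ?thesis by simp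
qed

lemma field_card_zero:
  fixes x :: "'a::{finite,field}"
  shows "of_nat (card (UNIV::'a set)) * x = 0"
proof -
  have inj: "inj ((+) x)" by (auto simp: inj_on_def)
  have img: "(+) x ` UNIV = UNIV" using inj by (simp add: finite_UNIV_inj_surj)
  have "sum id (UNIV::'a set) = sum id ((+) x ` UNIV)" by (simp add: img)
  also have "\<dots> = sum (\<lambda>y. x + y) UNIV" using sum.reindex[OF inj, of id] by simp
  also have "\<dots> = of_nat (card (UNIV::'a set)) * x + sum id UNIV" by (simp add: sum.distrib)
  finally show ?thesis by simp
qed

lemma of_nat_eq_0_prime:
  assumes "prime p" "card (UNIV::'a::{finite,field} set) = p ^ m" "m > 0"
  shows "(of_nat n :: 'a) = 0 \<longleftrightarrow> p dvd n"
proof -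
  have "(of_nat p :: 'a) ^ m = 0"
    using field_card_zero[of "1::'a"] assms by (simp add: of_nat_power)
  hence p0: "(of_nat p :: 'a) = 0" by simp
  show ?thesis
  proof
    assume "p dvd n" then obtain k where "n = p * k" by auto
    thus "(of_nat n :: 'a) = 0" using p0 by simp
  next
    assume n0: "(of_nat n :: 'a) = 0"
    show "p dvd n"
    proof (rule ccontr)
      assume "\<not> p dvd n"
      hence "coprime n p" using assms(1) by (metis prime_imp_coprime coprime_commute)
      hence g: "gcd n p = 1" by simp
      have "n \<noteq> 0" using \<open>\<not> p dvd n\<close> by (metis dvd_0_right)
      then obtain u v where "n * u = p * v + gcd n p" using bezout_nat by blast
      hence "n * u = p * v + 1" using g by simp
      hence "(of_nat (n*u) :: 'a) = of_nat (p*v+1)" by simp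
      thus False using n0 p0 by simp
    qed
  qed
qed

lemma coprime_pow_inj:
  fixes x y :: "'a::field"
  assumes "x \<noteq> 0" "y \<noteq> 0" "x ^ r = y ^ r" "x ^ s = y ^ s" "gcd r s = 1" "r \<noteq> 0"
  shows "x = y"
proof -
  obtain u v where uv: "r * u = s * v + gcd r s" using bezout_nat[OF assms(6)] by blast
  hence uv: "r * u = s * v + 1" using assms(5) by simp
  have "x ^ (r*u) = y ^ (r*u)" using assms(3) by (simp add: power_mult)
  moreover have "x ^ (s*v) = y ^ (s*v)" using assms(4) by (simp add: power_mult)
  ultimately have "x * x ^ (s*v) = y * x ^ (s*v)" unfolding uv by simp
  moreover have "x ^ (s*v) \<noteq> 0" using assms(1) by simp
  ultimately show ?thesis using assms(1) by auto
qed

lemma mult_mod_bij: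
  fixes c l :: nat
  assumes "coprime c l" "l > 0"
  shows "bij_betw (\<lambda>j. c * j mod l) {0..<l} {0..<l}"
    and "bij_betw (\<lambda>j. c * j mod l) {1..<l} {1..<l}"
proof -
  have inj: "inj_on (\<lambda>j. c * j mod l) {0..<l}"
  proof (rule inj_onI)
    fix i j assume "i \<in> {0..<l}" "j \<in> {0..<l}" "c * i mod l = c * j mod l"
    hence "[c * i = c * j] (mod l)" by (simp add: cong_def)
    hence "[i = j] (mod l)" using assms(1) cong_mult_lcancel_nat by blast
    thus "i = j" using \<open>i \<in> _\<close> \<open>j \<in> _\<close> by (simp add: cong_def)
  qed
  have "(\<lambda>j. c * j mod l) ` {0..<l} = {0..<l}"
    by (rule endo_inj_surj[OF _ _ inj]) (use assms in auto)
  thus "bij_betw (\<lambda>j. c * j mod l) {0..<l} {0..<l}" using inj by (simp add: bij_betw_def)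
  have inj1: "inj_on (\<lambda>j. c * j mod l) {1..<l}" by (rule inj_on_subset[OF inj]) auto
  have "(\<lambda>j. c * j mod l) ` {1..<l} \<subseteq> {1..<l}"
  proof
    fix x assume "x \<in> (\<lambda>j. c * j mod l) ` {1..<l}"
    then obtain j where j: "j \<in> {1..<l}" "x = c * j mod l" by auto
    have "x \<noteq> 0"
    proof
      assume "x = 0" hence "l dvd c * j" using j by auto
      hence "l dvd j" using assms(1) by (metis coprime_commute coprime_dvd_mult_right_iff)
      thus False using j by (auto dest: dvd_imp_le)
    qed
    thus "x \<in> {1..<l}" using j assms by auto
  qed
  hence "(\<lambda>j. c * j mod l) ` {1..<l} = {1..<l}"
    by (rule endo_inj_surj[OF _ _ inj1, rotated]) auto
  thus "bij_betw (\<lambda>j. c * j mod l) {1..<l} {1..<l}" using inj1 by (simp add: bij_betw_def)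
qed


locale ctx =
  fixes p m l e r s :: nat and \<gamma> :: "'a::{finite,field}"
  assumes prime: "prime p" and oddp: "odd p" and m0: "m > 0"
    and card: "card (UNIV :: 'a set) = p ^ m"
    and l0: "l > 0" and e0: "e > 0" and r0: "r > 0" and s0: "s > 0"
    and l3: "l \<ge> 3" and oddl: "odd l" and evens: "even s" and gle: "gcd l e = 1"
    and ldvd: "l dvd r + e * s" and cardls: "card (UNIV :: 'a set) - 1 = l * s"
    and prim: "primitive_elem \<gamma>"
begin

definition B :: "nat \<Rightarrow> 'a" where "B j = ((\<gamma> ^ s) ^ (e * j) + 1) ^ s"

lemma card_ge: "card (UNIV :: 'a set) = l * s + 1"
proof -
  have "card (UNIV :: 'a set) > 0" by (simp add: card_gt_0_iff)
  thus ?thesis using cardls by linarith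
qed

lemma nz_pow: "x \<noteq> 0 \<Longrightarrow> \<exists>k. x = \<gamma> ^ k"
  using prim unfolding primitive_elem_def by blast

lemma fermat: "x \<noteq> (0::'a) \<Longrightarrow> x ^ (l * s) = 1"
  using field_fermat[of x] cardls by simp

lemma two_nz: "(2::'a) \<noteq> 0"
proof
  assume "(2::'a) = 0"
  hence "(of_nat 2 :: 'a) = 0" by simp
  hence "p dvd 2" using of_nat_eq_0_prime[OF prime card m0] by blast
  hence "p \<le> 2" by (auto dest: dvd_imp_le)
  moreover have "p \<ge> 2" using prime by (simp add: prime_ge_2_nat)
  ultimately have "p = 2" by simp
  thus False using oddp by simp
qed

lemma gamma_nz: "\<gamma> \<noteq> 0"
proof
  assume g: "\<gamma> = 0"
  have "UNIV \<subseteq> {0, 1::'a}"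
  proof
    fix x :: 'a
    show "x \<in> {0,1}"
    proof (cases "x = 0")
      case False
      then obtain k where "x = \<gamma> ^ k" using nz_pow by blast
      thus ?thesis using g False by (cases k) auto
    qed simp
  qed
  hence "card (UNIV :: 'a set) \<le> card {0, 1::'a}" by (rule card_mono[rotated]) simp
  also have "\<dots> \<le> 2" by (simp add: card_insert_le_m1)
  moreover have "l * s \<ge> l" using s0 by simp
  ultimately show False using card_ge l3 by linarith
qed

lemma gamma_one: "\<gamma> ^ n = 1 \<longleftrightarrow> l * s dvd n"
proof
  assume "l * s dvd n"
  then obtain k where "n = l * s * k" by auto
  thus "\<gamma> ^ n = 1" using fermat[OF gamma_nz] by (simp add: power_mult)
next
  assume gn: "\<gamma> ^ n = 1"
  define n' where "n' = n mod (l * s)"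
  have "n = l * s * (n div (l * s)) + n'" unfolding n'_def by simp
  hence "\<gamma> ^ n = \<gamma> ^ (l * s * (n div (l * s))) * \<gamma> ^ n'"
    by (metis power_add)
  also have "\<gamma> ^ (l * s * (n div (l * s))) = 1"
    using fermat[OF gamma_nz] by (simp add: power_mult)
  finally have gn': "\<gamma> ^ n' = 1" using gn by simp
  show "l * s dvd n"
  proof (rule ccontr)
    assume "\<not> l * s dvd n"
    hence n'0: "n' > 0" unfolding n'_def by (simp add: dvd_eq_mod_eq_0)
    have n'lt: "n' < l * s" unfolding n'_def using l0 s0 by simp
    have "UNIV - {0} \<subseteq> (\<lambda>k. \<gamma> ^ k) ` {0..<n'}"
    proof
      fix x :: 'a assume "x \<in> UNIV - {0}"
      then obtain k where k: "x = \<gamma> ^ k" using nz_pow by blast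
      have "k = n' * (k div n') + k mod n'" by simp
      hence "\<gamma> ^ k = \<gamma> ^ (n' * (k div n')) * \<gamma> ^ (k mod n')"
        by (metis power_add)
      also have "\<dots> = \<gamma> ^ (k mod n')" using gn' by (simp add: power_mult)
      finally show "x \<in> (\<lambda>k. \<gamma> ^ k) ` {0..<n'}" using k n'0 by auto
    qed
    hence "card (UNIV - {0::'a}) \<le> card ((\<lambda>k. \<gamma> ^ k) ` {0..<n'})"
      by (rule card_mono[rotated]) simp
    also have "\<dots> \<le> n'" using card_image_le[of "{0..<n'}" "\<lambda>k. \<gamma> ^ k"] by simp
    finally have "card (UNIV :: 'a set) - 1 \<le> n'" by (simp add: card_Diff_singleton)
    thus False using cardls n'lt by simp
  qed
qed

lemma gamma_eq: "\<gamma> ^ a = \<gamma> ^ b \<longleftrightarrow> a mod (l * s) = b mod (l * s)"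
proof -
  have *: "\<gamma> ^ a = \<gamma> ^ b \<longleftrightarrow> a mod (l * s) = b mod (l * s)" if "a \<le> b" for a b
  proof -
    have "\<gamma> ^ b = \<gamma> ^ a * \<gamma> ^ (b - a)" using that by (simp add: power_add[symmetric])
    moreover have "\<gamma> ^ a \<noteq> 0" using gamma_nz by simp
    ultimately have "\<gamma> ^ a = \<gamma> ^ b \<longleftrightarrow> \<gamma> ^ (b - a) = 1"
      by (metis mult_cancel_left1)
    also have "\<dots> \<longleftrightarrow> l * s dvd b - a" by (rule gamma_one)
    also have "\<dots> \<longleftrightarrow> b mod (l * s) = a mod (l * s)" using that by (simp add: mod_eq_dvd_iff_nat)
    finally show ?thesis by auto
  qed
  show ?thesis
  proof (cases "a \<le> b")
    case True thus ?thesis using * by blast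
  next
    case False thus ?thesis using *[of b a] by auto
  qed
qed

lemma xi_eq: "(\<gamma> ^ s) ^ a = (\<gamma> ^ s) ^ b \<longleftrightarrow> a mod l = b mod l"
proof -
  have e1: "(\<gamma> ^ s) ^ a = \<gamma> ^ (s * a)" "(\<gamma> ^ s) ^ b = \<gamma> ^ (s * b)"
    by (simp_all add: power_mult)
  have e3: "l * s = s * l" by simp
  have "(\<gamma> ^ s) ^ a = (\<gamma> ^ s) ^ b \<longleftrightarrow> (s * a) mod (s * l) = (s * b) mod (s * l)"
    unfolding e1 gamma_eq e3 ..
  also have "\<dots> \<longleftrightarrow> a mod l = b mod l" using s0 by (simp add: mod_mult_mult1)
  finally show ?thesis .
qed

lemma xi_one: "(\<gamma> ^ s) ^ a = 1 \<longleftrightarrow> l dvd a"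
  using xi_eq[of a 0] by (simp add: dvd_eq_mod_eq_0)

lemma xi_neg: "(\<gamma> ^ s) ^ n \<noteq> - 1"
proof
  assume h: "(\<gamma> ^ s) ^ n = - 1"
  have "((\<gamma> ^ s) ^ n) ^ l = (\<gamma> ^ s) ^ (n * l)" by (simp add: power_mult)
  hence "((\<gamma> ^ s) ^ n) ^ l = 1" using xi_one by simp
  moreover have "(- 1 :: 'a) ^ l = - 1" using oddl by simp
  ultimately have "(-1::'a) = 1" using h by simp
  hence "(2::'a) = 0"
  proof -
    assume h1: "(-1::'a) = 1"
    have "(2::'a) = 1 + 1" by simp
    also have "\<dots> = 1 + (-1)" using h1 by simp
    finally show ?thesis by simp
  qed
  thus False using two_nz by simp
qed

lemma A_nz: "(\<gamma> ^ s) ^ n + 1 \<noteq> 0"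
proof
  assume "(\<gamma> ^ s) ^ n + 1 = 0"
  hence "(\<gamma> ^ s) ^ n = -1" by (simp add: eq_neg_iff_add_eq_0)
  thus False using xi_neg by simp
qed

lemma B_root: "B i ^ l = 1"
proof -
  have "B i ^ l = ((\<gamma> ^ s) ^ (e * i) + 1) ^ (l * s)" unfolding B_def
    by (simp add: power_mult[symmetric] mult.commute)
  thus ?thesis using fermat[OF A_nz] by simp
qed

lemma key: assumes "l dvd k + j"
  shows "(\<gamma> ^ s) ^ (k * r) * ((\<gamma> ^ s) ^ (e * k) + 1) ^ s = B j"
proof -
  let ?x = "\<gamma> ^ s"
  have "?x ^ (e * (k + j)) = 1" using xi_one assms by simp
  hence "?x ^ (e * k) * (?x ^ (e * j) + 1) = ?x ^ (e * k) + 1"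
    by (simp add: distrib_left distrib_right power_add[symmetric] add.commute)
  hence "(?x ^ (e * k) + 1) ^ s = ?x ^ (e * k * s) * B j"
    unfolding B_def by (metis power_mult power_mult_distrib)
  moreover have "?x ^ (k * r) * ?x ^ (e * k * s) = 1"
  proof -
    have "?x ^ (k * r) * ?x ^ (e * k * s) = ?x ^ (k * (r + e * s))"
      by (simp add: power_add[symmetric] algebra_simps)
    thus ?thesis using xi_one ldvd by simp
  qed
  ultimately show ?thesis by (metis mult.assoc mult_1)
qed

definition Pf :: "'a \<Rightarrow> 'a" where "Pf x = x ^ r * (x ^ (e * s) + 1)"

lemma poly_P: "poly (monom 1 r * (monom 1 (e * s) + 1) :: 'a poly) = Pf"
  by (rule ext) (simp add: poly_monom Pf_def)

lemma jdef: "l dvd t + (l - t mod l) mod l"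
proof (cases "t mod l = 0")
  case True thus ?thesis by (simp add: dvd_eq_mod_eq_0)
next
  case False
  hence "(l - t mod l) mod l = l - t mod l" using l0 by simp
  moreover have "t + (l - t mod l) = t div l * l + l"
    using div_mult_mod_eq[of t l] mod_less_divisor[OF l0, of t] by linarith
  ultimately show ?thesis by simp
qed

lemma P_pow: "Pf (\<gamma> ^ t) ^ s = B ((l - t mod l) mod l)"
proof -
  have "Pf (\<gamma> ^ t) ^ s = (\<gamma> ^ s) ^ (t * r) * ((\<gamma> ^ s) ^ (e * t) + 1) ^ s"
  proof -
    have a1: "((\<gamma> ^ t) ^ r) ^ s = (\<gamma> ^ s) ^ (t * r)" by (simp add: power_mult[symmetric] mult_ac)
    have a2: "(\<gamma> ^ t) ^ (e * s) = (\<gamma> ^ s) ^ (e * t)" by (simp add: power_mult[symmetric] mult_ac)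
    have "Pf (\<gamma> ^ t) ^ s = ((\<gamma> ^ t) ^ r) ^ s * ((\<gamma> ^ t) ^ (e * s) + 1) ^ s"
      by (simp only: Pf_def power_mult_distrib)
    thus ?thesis unfolding a1 a2 .
  qed
  also have "\<dots> = B ((l - t mod l) mod l)" by (rule key[OF jdef])
  finally show ?thesis .
qed


lemma Pf0: "Pf 0 = 0" using r0 by (simp add: Pf_def)

lemma pow_es: "(\<gamma> ^ t) ^ (e * s) = (\<gamma> ^ s) ^ (e * t)"
  by (simp add: power_mult[symmetric] mult_ac)

lemma pow_s: "(\<gamma> ^ t) ^ s = (\<gamma> ^ s) ^ t"
  by (simp add: power_mult[symmetric] mult_ac)

lemma Pf_nz: "x \<noteq> (0::'a) \<Longrightarrow> x ^ (e * s) + 1 \<noteq> 0"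
proof -
  assume "x \<noteq> 0"
  then obtain t where "x = \<gamma> ^ t" using nz_pow by blast
  thus ?thesis using A_nz pow_es by simp
qed

definition M :: "'a set" where "M = (\<lambda>k. (\<gamma> ^ s) ^ k) ` {0..<l}"

lemma card_M: "card M = l"
proof -
  have "inj_on (\<lambda>k. (\<gamma> ^ s) ^ k) {0..<l}"
    by (rule inj_onI) (simp add: xi_eq)
  thus ?thesis unfolding M_def by (simp add: card_image)
qed

lemma M1: assumes "bij Pf" shows "gcd r s = 1"
proof (rule ccontr)
  assume dn: "gcd r s \<noteq> 1"
  define d where "d = gcd r s"
  have d0: "d > 0" using s0 by (simp add: d_def)
  hence d2: "d \<ge> 2" using dn d_def by linarith
  have ds: "d dvd s" "d dvd r" by (simp_all add: d_def)
  then obtain s' where s': "s = d * s'" by (auto elim: dvdE)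
  obtain r' where r': "r = d * r'" using ds by (auto elim: dvdE)
  define N where "N = l * s"
  have dN: "d dvd N" using ds by (simp add: N_def)
  have Nd: "N div d * d = N" using dN by simp
  define \<omega> where "\<omega> = \<gamma> ^ (N div d)"
  have N0: "N > 0" using l0 s0 by (simp add: N_def)
  have "N div d < N" using d2 N0 by simp
  moreover have "N div d > 0" using dN N0 d0 by (metis Nd gr0I mult_is_0 neq0_conv)
  ultimately have "\<omega> \<noteq> 1" using gamma_eq[of "N div d" 0] unfolding \<omega>_def N_def by simp
  have os: "\<omega> ^ s = 1"
  proof -
    have e: "N div d * s = N * s'" using Nd s' by (metis mult.assoc)
    have "\<omega> ^ s = \<gamma> ^ (N div d * s)" by (simp add: \<omega>_def power_mult)
    also have "\<dots> = \<gamma> ^ (N * s')" using e by simp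
    also have "\<dots> = 1" by (simp add: gamma_one N_def)
    finally show ?thesis .
  qed
  have or: "\<omega> ^ r = 1"
  proof -
    have e: "N div d * r = N * r'" using Nd r' by (metis mult.assoc)
    have "\<omega> ^ r = \<gamma> ^ (N div d * r)" by (simp add: \<omega>_def power_mult)
    also have "\<dots> = \<gamma> ^ (N * r')" using e by simp
    also have "\<dots> = 1" by (simp add: gamma_one N_def)
    finally show ?thesis .
  qed
  have "Pf \<omega> = Pf 1" unfolding Pf_def using os or by (simp add: power_mult mult.commute[of e s])
  hence "\<omega> = 1" using assms by (simp add: bij_def inj_eq)
  thus False using \<open>\<omega> \<noteq> 1\<close> by simp
qed

lemma M2: assumes "bij Pf" shows "inj_on B {0..<l}"
proof (rule eq_card_imp_inj_on)
  show "finite {0..<l}" by simp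
  have "M \<subseteq> B ` {0..<l}"
  proof
    fix y assume "y \<in> M"
    then obtain k where k: "k < l" "y = (\<gamma> ^ s) ^ k" unfolding M_def by auto
    have "\<gamma> ^ k \<noteq> 0" using gamma_nz by simp
    obtain x where x: "Pf x = \<gamma> ^ k" using assms unfolding bij_def surj_def by metis
    have "x \<noteq> 0" using x Pf0 gamma_nz by auto
    then obtain t where t: "x = \<gamma> ^ t" using nz_pow by blast
    have "y = B ((l - t mod l) mod l)" using P_pow[of t] x t k pow_s by simp
    moreover have "(l - t mod l) mod l < l" using l0 by simp
    ultimately show "y \<in> B ` {0..<l}" by auto
  qed
  hence "l \<le> card (B ` {0..<l})" using card_M by (metis card_mono finite_atLeastLessThan finite_imageI)
  moreover have "card (B ` {0..<l}) \<le> l" using card_image_le[of "{0..<l}" B] by simp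
  ultimately show "card (B ` {0..<l}) = card {0..<l}" by simp
qed

lemma M3: assumes "gcd r s = 1" "inj_on B {0..<l}" shows "bij Pf"
proof -
  have "inj Pf"
  proof (rule injI)
    fix x y assume eq: "Pf x = Pf y"
    show "x = y"
    proof (cases "x = 0 \<or> y = 0")
      case True
      have "z \<noteq> 0 \<Longrightarrow> Pf z \<noteq> 0" for z using Pf_nz[of z] by (simp add: Pf_def)
      thus ?thesis using True eq Pf0 by metis
    next
      case False
      then obtain a b where a: "x = \<gamma> ^ a" and b: "y = \<gamma> ^ b" using nz_pow by meson
      have "B ((l - a mod l) mod l) = B ((l - b mod l) mod l)" using P_pow[of a] P_pow[of b] eq a b by simp
      hence jj: "(l - a mod l) mod l = (l - b mod l) mod l" using assms(2) l0 by (simp add: inj_on_eq_iff)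
      have "[a + (l - a mod l) mod l = 0] (mod l)" "[b + (l - b mod l) mod l = 0] (mod l)"
        using jdef[of a] jdef[of b] by (simp_all add: cong_0_iff)
      hence "[a + (l - a mod l) mod l = b + (l - a mod l) mod l] (mod l)" using jj
        by (metis cong_sym cong_trans)
      hence "[a = b] (mod l)" by (simp add: cong_add_rcancel_nat)
      hence xs: "x ^ s = y ^ s" using a b pow_s xi_eq by (simp add: cong_def)
      have "x ^ (e * s) = y ^ (e * s)" using xs by (simp add: power_mult mult.commute[of e s])
      hence "x ^ r * (x ^ (e * s) + 1) = y ^ r * (x ^ (e * s) + 1)" using eq by (simp add: Pf_def)
      hence "x ^ r = y ^ r" using Pf_nz[of x] False by simp
      thus ?thesis using coprime_pow_inj[of x y r s] xs False assms(1) r0 by simp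
    qed
  qed
  thus ?thesis by (simp add: bij_def finite_UNIV_inj_surj)
qed


lemma B0: "B 0 = 2 ^ s" by (simp add: B_def one_add_one)

lemma M4: assumes "inj_on B {0..<l}" shows "\<not> l dvd r"
proof
  assume "l dvd r"
  hence x1: "(\<gamma> ^ s) ^ (1 * r) = 1" using xi_one by simp
  have "l dvd 1 + (l - 1)" using l0 by simp
  from key[OF this] x1 have "B 1 = B (l - 1)" by (simp add: B_def)
  moreover have "1 \<in> {0..<l}" "l - 1 \<in> {0..<l}" "1 \<noteq> l - 1" using l3 by auto
  ultimately show False using assms by (simp add: inj_on_eq_iff)
qed

lemma xi_mod: "(\<gamma> ^ s) ^ a = (\<gamma> ^ s) ^ (a mod l)"
  by (simp add: xi_eq)

lemma cop2: "coprime 2 l" using oddl by simp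

lemma cope: "coprime e l" using gle by (simp add: coprime_iff_gcd_eq_1 gcd.commute)

lemma prod_plus: "(\<Prod>j\<in>{1..<l}. (\<gamma> ^ s) ^ j + 1) = 1"
proof -
  let ?x = "\<gamma> ^ s"
  define Q where "Q = (\<Prod>j\<in>{1..<l}. 1 - ?x ^ j)"
  have Q0: "Q \<noteq> 0" unfolding Q_def
  proof
    assume "(\<Prod>j\<in>{1..<l}. 1 - ?x ^ j) = 0"
    then obtain j where j: "j \<in> {1..<l}" "1 - ?x ^ j = 0" by auto
    hence "l dvd j" using xi_one by simp
    thus False using j by (auto dest: dvd_imp_le)
  qed
  have "(\<Prod>j\<in>{1..<l}. ?x ^ j + 1) * Q = (\<Prod>j\<in>{1..<l}. (?x ^ j + 1) * (1 - ?x ^ j))"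
    unfolding Q_def by (simp add: prod.distrib)
  also have "\<dots> = (\<Prod>j\<in>{1..<l}. 1 - ?x ^ (2 * j))"
    by (rule prod.cong) (simp_all add: algebra_simps power_mult power2_eq_square)
  also have "\<dots> = (\<Prod>j\<in>{1..<l}. 1 - ?x ^ (2 * j mod l))"
    by (rule prod.cong) (simp_all add: xi_eq)
  also have "\<dots> = Q" unfolding Q_def
    by (rule prod.reindex_bij_betw[OF mult_mod_bij(2)[OF cop2 l0], of "\<lambda>j. 1 - ?x ^ j"])
  finally show ?thesis using Q0 by simp
qed

lemma prod_A: "(\<Prod>j\<in>{0..<l}. (\<gamma> ^ s) ^ (e * j) + 1) = 2"
proof -
  let ?x = "\<gamma> ^ s"
  have "(\<Prod>j\<in>{0..<l}. ?x ^ (e * j) + 1) = (\<Prod>j\<in>{0..<l}. ?x ^ (e * j mod l) + 1)"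
    by (rule prod.cong) (simp_all add: xi_eq)
  also have "\<dots> = (\<Prod>j\<in>{0..<l}. ?x ^ j + 1)"
    by (rule prod.reindex_bij_betw[OF mult_mod_bij(1)[OF cope l0], of "\<lambda>j. ?x ^ j + 1"])
  also have "\<dots> = 2 * (\<Prod>j\<in>{1..<l}. ?x ^ j + 1)"
  proof -
    have "{0..<l} = insert 0 {1..<l}" using l0 by auto
    thus ?thesis by (simp add: one_add_one)
  qed
  also have "\<dots> = 2" using prod_plus by simp
  finally show ?thesis .
qed

lemma M5: assumes "inj_on B {0..<l}" shows "(2::'a) ^ s = 1"
proof -
  let ?x = "\<gamma> ^ s"
  have sub: "B ` {0..<l} \<subseteq> M"
  proof
    fix y assume "y \<in> B ` {0..<l}"
    then obtain j where y: "y = B j" by auto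
    obtain t where t: "?x ^ (e * j) + 1 = \<gamma> ^ t" using nz_pow A_nz by blast
    have "y = ?x ^ t" using y t pow_s by (simp add: B_def)
    also have "\<dots> = ?x ^ (t mod l)" by (rule xi_mod)
    finally show "y \<in> M" unfolding M_def using l0 by auto
  qed
  have "card (B ` {0..<l}) = card M" using card_M assms by (simp add: card_image)
  hence BM: "B ` {0..<l} = M" using sub by (intro card_subset_eq) (simp_all add: M_def)
  have "prod B {0..<l} = prod id (B ` {0..<l})" using prod.reindex[OF assms, of id] by simp
  also have "\<dots> = prod id M" by (simp add: BM)
  also have "\<dots> = (\<Prod>k\<in>{0..<l}. ?x ^ k)" unfolding M_def
    by (subst prod.reindex) (auto simp: inj_on_def xi_eq)
  also have "\<dots> = ?x ^ (\<Sum>{0..<l})" by (simp add: power_sum)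
  also have "\<dots> = 1"
  proof -
    obtain t where t: "l = 2 * t + 1" using oddl by (metis oddE)
    have "{0..<l} = {0..2*t}" using t by auto
    hence "\<Sum>{0..<l} = (2 * t * Suc (2 * t)) div 2" by (simp add: gauss_sum_nat)
    also have "\<dots> = t * l" using t by simp
    finally show ?thesis using xi_one by simp
  qed
  finally have p1: "prod B {0..<l} = 1" .
  have "prod B {0..<l} = (\<Prod>j\<in>{0..<l}. ?x ^ (e * j) + 1) ^ s"
    unfolding B_def by (simp add: prod_power_distrib)
  thus ?thesis using p1 prod_A by simp
qed

lemma M6: "p dvd 2 ^ s - 1 \<longleftrightarrow> (2::'a) ^ s = 1"
proof -
  have h1: "p dvd 2 ^ s - 1 \<longleftrightarrow> (of_nat (2 ^ s - 1) :: 'a) = 0"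
    by (rule of_nat_eq_0_prime[OF prime card m0, symmetric])
  have h2: "(of_nat (2 ^ s - 1) :: 'a) = 2 ^ s - 1" by (simp add: of_nat_diff)
  show ?thesis unfolding h1 h2 by simp
qed

lemma Ind_eq: "x \<noteq> 0 \<Longrightarrow> \<gamma> ^ Ind \<gamma> x = x"
proof -
  assume "x \<noteq> 0"
  then obtain k where "x = \<gamma> ^ k" using nz_pow by blast
  hence "x = \<gamma> ^ (SOME b. x = \<gamma> ^ b)" by (rule someI)
  thus ?thesis by (simp add: Ind_def)
qed

lemma M8: assumes "k \<in> {1..<l}"
  shows "((Ind \<gamma> ((\<gamma> ^ s) ^ (e * k) + 1) + k * r) mod l = Ind \<gamma> 2 mod l) \<longleftrightarrow> B (l - k) = 2 ^ s"
proof -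
  let ?x = "\<gamma> ^ s"
  define a where "a = Ind \<gamma> (?x ^ (e * k) + 1)"
  define b where "b = Ind \<gamma> (2::'a)"
  have ga: "\<gamma> ^ a = ?x ^ (e * k) + 1" unfolding a_def by (rule Ind_eq[OF A_nz])
  have gb: "\<gamma> ^ b = 2" unfolding b_def by (rule Ind_eq[OF two_nz])
  have "(a + k * r) mod l = b mod l \<longleftrightarrow> ?x ^ (a + k * r) = ?x ^ b" by (simp add: xi_eq)
  also have "?x ^ (a + k * r) = ?x ^ (k * r) * (?x ^ (e * k) + 1) ^ s"
    using ga pow_s[of a] by (simp add: power_add)
  also have "\<dots> = B (l - k)" using assms by (intro key) auto
  also have "?x ^ b = 2 ^ s" using gb pow_s[of b] by simp
  finally show ?thesis unfolding a_def b_def .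
qed

lemma M9: "inj_on B {0..<l} \<longleftrightarrow> inj_on B {1..<l} \<and> (\<forall>k\<in>{1..<l}. B k \<noteq> 2 ^ s)"
proof -
  have "{0..<l} = insert 0 {1..<l}" using l0 by auto
  hence "inj_on B {0..<l} \<longleftrightarrow> inj_on B {1..<l} \<and> B 0 \<notin> B ` {1..<l}" by simp
  moreover have "B 0 \<notin> B ` {1..<l} \<longleftrightarrow> (\<forall>k\<in>{1..<l}. B k \<noteq> 2 ^ s)"
    unfolding B0 by (metis (mono_tags, lifting) image_iff)
  ultimately show ?thesis by simp
qed

lemma main: "bij Pf \<longleftrightarrow> (gcd r s = 1 \<and> p dvd 2 ^ s - 1 \<and> \<not> l dvd r \<and>
      (\<forall>i\<in>{1..l-1}. B i ^ l = 1) \<and> inj_on B {1..l-1} \<and>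
      (\<forall>k\<in>{1..l-1}. \<not> (Ind \<gamma> ((\<gamma> ^ s) ^ (e * k) + 1) + k * r) mod l = Ind \<gamma> 2 mod l))"
proof -
  have I: "{1..l-1} = {1..<l}" using l0 by auto
  have C6: "(\<forall>k\<in>{1..<l}. \<not> (Ind \<gamma> ((\<gamma> ^ s) ^ (e * k) + 1) + k * r) mod l = Ind \<gamma> 2 mod l)
     \<longleftrightarrow> (\<forall>k\<in>{1..<l}. B k \<noteq> 2 ^ s)"
  proof -
    have "(\<forall>k\<in>{1..<l}. \<not> (Ind \<gamma> ((\<gamma> ^ s) ^ (e * k) + 1) + k * r) mod l = Ind \<gamma> 2 mod l)
       \<longleftrightarrow> (\<forall>k\<in>{1..<l}. B (l - k) \<noteq> 2 ^ s)" using M8 by auto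
    also have "\<dots> \<longleftrightarrow> (\<forall>k\<in>{1..<l}. B k \<noteq> 2 ^ s)"
    proof
      assume h: "\<forall>k\<in>{1..<l}. B (l - k) \<noteq> 2 ^ s"
      show "\<forall>k\<in>{1..<l}. B k \<noteq> 2 ^ s"
      proof
        fix k assume k: "k \<in> {1..<l}"
        hence "l - k \<in> {1..<l}" by auto
        with h have "B (l - (l - k)) \<noteq> 2 ^ s" by blast
        thus "B k \<noteq> 2 ^ s" using k by simp
      qed
    qed auto
    finally show ?thesis .
  qed
  show ?thesis unfolding I C6 M6
  proof
    assume b: "bij Pf"
    have i0: "inj_on B {0..<l}" using M2[OF b] .
    show "gcd r s = 1 \<and> (2::'a) ^ s = 1 \<and> \<not> l dvd r \<and> (\<forall>i\<in>{1..<l}. B i ^ l = 1) \<and>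
      inj_on B {1..<l} \<and> (\<forall>k\<in>{1..<l}. B k \<noteq> 2 ^ s)"
      using M1[OF b] M5[OF i0] M4[OF i0] B_root i0 M9 by simp
  next
    assume h: "gcd r s = 1 \<and> (2::'a) ^ s = 1 \<and> \<not> l dvd r \<and> (\<forall>i\<in>{1..<l}. B i ^ l = 1) \<and>
      inj_on B {1..<l} \<and> (\<forall>k\<in>{1..<l}. B k \<noteq> 2 ^ s)"
    hence "inj_on B {0..<l}" using M9 by blast
    thus "bij Pf" using M3 h by simp
  qed
qed

end

theorem theorem4p3:
  fixes p m l e r s :: nat and \<gamma> :: "'a::{finite,field}"
  assumes "prime p" and "odd p" and "m > 0" and "card (UNIV :: 'a set) = p ^ m"
    and "l > 0" and "e > 0" and "r > 0" and "s > 0"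
    and "l \<ge> 3" and "odd l" and "even s" and "gcd l e = 1"
    and "l dvd r + e * s" and "card (UNIV :: 'a set) - 1 = l * s"
    and "primitive_elem \<gamma>"
  shows "perm_poly (monom 1 r * (monom 1 (e * s) + 1) :: 'a poly) \<longleftrightarrow>
     (gcd r s = 1 \<and> p dvd 2 ^ s - 1 \<and> \<not> l dvd r \<and>
      (\<forall>i\<in>{1..l-1}. ((((\<gamma> ^ s) ^ (e * i) + 1) ^ s) ^ l = 1)) \<and>
      inj_on (\<lambda>i. ((\<gamma> ^ s) ^ (e * i) + 1) ^ s) {1..l-1} \<and>
      (\<forall>k\<in>{1..l-1}. \<not> (Ind \<gamma> ((\<gamma> ^ s) ^ (e * k) + 1) + k * r) mod l = Ind \<gamma> 2 mod l))"
proof -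
  interpret ctx p m l e r s \<gamma> by unfold_locales (rule assms)+
  have Bf: "B = (\<lambda>i. ((\<gamma> ^ s) ^ (e * i) + 1) ^ s)" by (rule ext) (simp add: B_def)
  show ?thesis unfolding perm_poly_def poly_P using main unfolding Bf .
qed

end
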